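(* For every $n$-qubit pure state $\ket\psi=\sum_{x\in\mathbb F_2^n}c_x\ket x$, $$32^n\sum_{x\in\mathbb F_2^{2n}}\widehat{p_\psi}(x)^3\ \ge\ |c_{0}|^{12},$$ where $c_0$ is the amplitude of $\ket{0^n}$.
   Context: For $x=(a,b)\in\mathbb F_2^{2n}$ with $a,b\in\mathbb F_2^n$, the Weyl operator is $W_x=i^{a\cdot b}X^{a_1}Z^{b_1}\otimes\cdots\otimes X^{a_n}Z^{b_n}$, where $a\cdot b=\sum_j a_jb_j\in\mathbb Z$. The characteristic distribution is $p_\psi(x)=2^{-n}|\braket{\psi|W_x|\psi}|^2$. For $f:\mathbb F_2^{2n}\to\mathbb R$ the Fourier coefficients are $\widehat f(x)=4^{-n}\sum_{y\in\mathbb F_2^{2n}}f(y)(-1)^{x\cdot y}$ (dot product mod 2). *)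

theory Defs
  imports "HOL-Analysis.Analysis"
begin

text \<open>Bit strings in F_2^n are boolean lists of length n.\<close>
definition bitstrings :: "nat \<Rightarrow> bool list set" where
  "bitstrings n = {xs. length xs = n}"

definition bdot :: "bool list \<Rightarrow> bool list \<Rightarrow> nat" where
  "bdot a b = card {j. j < length a \<and> j < length b \<and> a ! j \<and> b ! j}"

definition bxor :: "bool list \<Rightarrow> bool list \<Rightarrow> bool list" where
  "bxor a b = map2 (\<noteq>) a b"

text \<open>Action of the single-qubit-tensor Pauli string X^a Z^b on a vector psi
  (given by its amplitudes in the computational basis): Z^b |y> = (-1)^(b.y) |y>,
  X^a |y> = |y xor a>.\<close>
definition XZ_apply :: "bool list \<Rightarrow> bool list \<Rightarrow> (bool list \<Rightarrow> complex) \<Rightarrow> (bool list \<Rightarrow> complex)" where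
  "XZ_apply a b psi = (\<lambda>z. (-1) ^ bdot b (bxor z a) * psi (bxor z a))"

definition weyl_apply :: "bool list \<Rightarrow> bool list \<Rightarrow> (bool list \<Rightarrow> complex) \<Rightarrow> (bool list \<Rightarrow> complex)" where
  "weyl_apply a b psi = (\<lambda>z. \<i> ^ bdot a b * XZ_apply a b psi z)"

definition braket :: "nat \<Rightarrow> (bool list \<Rightarrow> complex) \<Rightarrow> (bool list \<Rightarrow> complex) \<Rightarrow> complex" where
  "braket n phi chi = (\<Sum>z\<in>bitstrings n. cnj (phi z) * chi z)"

definition char_dist :: "nat \<Rightarrow> (bool list \<Rightarrow> complex) \<Rightarrow> bool list \<times> bool list \<Rightarrow> real" where
  "char_dist n psi x = (case x of (a, b) \<Rightarrow>
     (1 / 2 ^ n) * (cmod (braket n psi (weyl_apply a b psi)))\<^sup>2)"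

definition sign2 :: "bool list \<times> bool list \<Rightarrow> bool list \<times> bool list \<Rightarrow> real" where
  "sign2 x y = (case x of (a, b) \<Rightarrow> case y of (a', b') \<Rightarrow>
     (-1) ^ (bdot a a' + bdot b b'))"

definition fourier :: "nat \<Rightarrow> (bool list \<times> bool list \<Rightarrow> real) \<Rightarrow> bool list \<times> bool list \<Rightarrow> real" where
  "fourier n f x = (1 / 4 ^ n) * (\<Sum>y\<in>bitstrings n \<times> bitstrings n. f y * sign2 x y)"

end

theory Submission imports Defs begin

lemma mem_bitstrings[simp]: "xs \<in> bitstrings n \<longleftrightarrow> length xs = n"
  by (simp add: bitstrings_def)

lemma finite_bitstrings[simp]: "finite (bitstrings n)"
  unfolding bitstrings_def using finite_lists_length_eq[of "UNIV::bool set" n] by simp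

lemma bxor_Nil1[simp]: "bxor [] b = []" and bxor_Nil2[simp]: "bxor a [] = []"
  and bxor_Cons[simp]: "bxor (x#xs) (y#ys) = (x \<noteq> y) # bxor xs ys"
  by (auto simp: bxor_def)

lemma length_bxor[simp]: "length (bxor a b) = min (length a) (length b)"
  by (simp add: bxor_def)

lemma bxor_comm: "bxor a b = bxor b a"
  by (induction a arbitrary: b; case_tac b; auto)

lemma bxor_assoc: "bxor (bxor a b) d = bxor a (bxor b d)"
  by (induction a arbitrary: b d; case_tac b; case_tac d; auto)

lemma bxor_zero[simp]: "bxor a (replicate (length a) False) = a"
  by (induction a) auto

lemma bxor_self[simp]: "bxor a a = replicate (length a) False"
  by (induction a) auto

lemma bxor_cancel[simp]: "length a = length b \<Longrightarrow> bxor (bxor a b) b = a"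
  by (simp add: bxor_assoc) (metis bxor_zero)

lemma bxor_cancel2[simp]: "length a = length b \<Longrightarrow> bxor a (bxor a b) = b"
  by (metis bxor_assoc bxor_comm bxor_self bxor_zero)

lemma bdot_Nil1[simp]: "bdot [] b = 0" and bdot_Nil2[simp]: "bdot a [] = 0"
  by (auto simp: bdot_def)

lemma bdot_Cons[simp]: "bdot (x#xs) (y#ys) = (if x \<and> y then 1 else 0) + bdot xs ys"
proof -
  have "{j. j < length (x#xs) \<and> j < length (y#ys) \<and> (x#xs) ! j \<and> (y#ys) ! j}
      = (if x \<and> y then {0} else {}) \<union> Suc ` {j. j < length xs \<and> j < length ys \<and> xs ! j \<and> ys ! j}"
    apply (auto simp: image_iff)
    apply (case_tac xa; auto)+
    done
  then show ?thesis unfolding bdot_def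
    by (auto simp: card_image)
qed

lemma bdot_comm: "bdot a b = bdot b a"
  unfolding bdot_def by (metis (no_types, lifting) conj_commute conj_left_commute)

lemma sign_bxor:
  "length u = length b \<Longrightarrow> length v = length b \<Longrightarrow>
   ((-1::'a::comm_ring_1) ^ bdot b (bxor u v)) = (-1) ^ bdot b u * (-1) ^ bdot b v"
proof (induction b arbitrary: u v)
  case Nil then show ?case by simp
next
  case (Cons x b)
  then obtain u0 us v0 vs where "u = u0#us" "v = v0#vs" by (metis length_Suc_conv)
  with Cons show ?case by (auto simp: power_add)
qed

lemma char_sum:
  "length u = n \<Longrightarrow> (\<Sum>b\<in>bitstrings n. (-1::'a::comm_ring_1) ^ bdot b u)
     = (if u = replicate n False then 2 ^ n else 0)"
proof (induction n arbitrary: u)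
  case 0 then show ?case by (simp add: bitstrings_def)
next
  case (Suc n)
  then obtain u0 us where u: "u = u0#us" "length us = n" by (metis length_Suc_conv)
  have B: "bitstrings (Suc n) = (\<lambda>(x,xs). x#xs) ` (UNIV \<times> bitstrings n)"
    by (auto simp: image_iff length_Suc_conv)
  have inj: "inj_on (\<lambda>(x,xs). x#xs) (UNIV \<times> bitstrings n)" by (auto simp: inj_on_def)
  have "(\<Sum>b\<in>bitstrings (Suc n). (-1::'a) ^ bdot b u)
     = (\<Sum>(x,xs)\<in>UNIV \<times> bitstrings n. (-1::'a) ^ bdot (x#xs) u)"
    unfolding B by (subst sum.reindex[OF inj]) (simp add: case_prod_unfold)
  also have "\<dots> = (\<Sum>x\<in>UNIV. \<Sum>xs\<in>bitstrings n. (-1::'a) ^ bdot (x#xs) u)"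
    by (simp add: sum.cartesian_product)
  also have "\<dots> = (if u0 then 0 else 2) * (\<Sum>xs\<in>bitstrings n. (-1::'a) ^ bdot xs us)"
    by (simp add: u UNIV_bool power_add sum_distrib_left[symmetric] algebra_simps sum_negf)
  finally show ?case using Suc.IH[OF u(2)] u by auto
qed


lemma neg1_sq: "((-1::'a::comm_ring_1) ^ k) * (-1) ^ k = 1"
  by (simp add: power_add[symmetric] mult_2[symmetric] power_mult)

lemma char_dist_E:
  "char_dist n c (a,b) = (1/2^n) * (cmod (braket n c (XZ_apply a b c)))^2"
proof -
  have "braket n c (weyl_apply a b c) = \<i> ^ bdot a b * braket n c (XZ_apply a b c)"
    unfolding braket_def weyl_apply_def by (simp add: sum_distrib_left mult_ac)
  then show ?thesis unfolding char_dist_def by (simp add: norm_mult norm_power)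
qed

lemma Esq:
  assumes "length a = n" "length b = n"
  shows "complex_of_real ((cmod (braket n c (XZ_apply a b c)))^2)
   = (\<Sum>z\<in>bitstrings n. \<Sum>w\<in>bitstrings n. cnj (c z) * c (bxor z a) * c w * cnj (c (bxor w a))
        * (-1) ^ bdot b z * (-1) ^ bdot b w)"
proof -
  have "complex_of_real ((cmod (braket n c (XZ_apply a b c)))^2)
     = braket n c (XZ_apply a b c) * cnj (braket n c (XZ_apply a b c))"
    by (rule complex_norm_square)
  also have "\<dots> = (\<Sum>z\<in>bitstrings n. \<Sum>w\<in>bitstrings n.
       (cnj (c z) * ((-1) ^ bdot b (bxor z a) * c (bxor z a))) *
       cnj (cnj (c w) * ((-1) ^ bdot b (bxor w a) * c (bxor w a))))"
    unfolding braket_def XZ_apply_def by (simp add: sum_product)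
  also have "\<dots> = (\<Sum>z\<in>bitstrings n. \<Sum>w\<in>bitstrings n. cnj (c z) * c (bxor z a) * c w * cnj (c (bxor w a))
        * (-1) ^ bdot b z * (-1) ^ bdot b w)"
  proof (intro sum.cong refl)
    fix z w assume "z \<in> bitstrings n" "w \<in> bitstrings n"
    then have "((-1::complex) ^ bdot b (bxor z a)) * (-1) ^ bdot b (bxor w a)
       = ((-1) ^ bdot b z * (-1) ^ bdot b w) * ((-1) ^ bdot b a * (-1) ^ bdot b a)"
      using assms by (simp add: sign_bxor mult_ac)
    also have "\<dots> = (-1) ^ bdot b z * (-1) ^ bdot b w" by (simp add: neg1_sq)
    finally have *: "((-1::complex) ^ bdot b (bxor z a)) * (-1) ^ bdot b (bxor w a)
       = (-1) ^ bdot b z * (-1) ^ bdot b w" .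
    show "(cnj (c z) * ((-1) ^ bdot b (bxor z a) * c (bxor z a))) *
       cnj (cnj (c w) * ((-1) ^ bdot b (bxor w a) * c (bxor w a)))
      = cnj (c z) * c (bxor z a) * c w * cnj (c (bxor w a))
        * (-1) ^ bdot b z * (-1) ^ bdot b w"
      using * by (simp add: mult_ac)
  qed
  finally show ?thesis .
qed


lemma bxor_eq_zero_iff:
  "length x = length y \<Longrightarrow> bxor x y = replicate (length x) False \<longleftrightarrow> x = y"
  by (induction x arbitrary: y; case_tac y; auto)

lemma delta_cond:
  assumes "length z = n" "length w = n" "length b = n"
  shows "bxor (bxor z w) b = replicate n False \<longleftrightarrow> w = bxor z b"
proof -
  have "bxor (bxor z w) b = replicate n False \<longleftrightarrow> bxor z w = b"
    using bxor_eq_zero_iff[of "bxor z w" b] assms by simp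
  also have "\<dots> \<longleftrightarrow> w = bxor z b"
    using assms by (metis bxor_cancel2)
  finally show ?thesis .
qed

lemma swap3: "(\<Sum>x\<in>A. \<Sum>y\<in>B. \<Sum>z\<in>C. f x y z) = (\<Sum>y\<in>B. \<Sum>z\<in>C. \<Sum>x\<in>A. f x y z)"
  by (subst sum.swap) (simp add: sum.swap[of _ A])

lemma fourier_swap:
  assumes a: "length a = n" and b: "length b = n"
  shows "fourier n (char_dist n c) (a,b) = (1/2^n) * char_dist n c (b,a)"
proof -
  define B where "B = bitstrings n"
  define s :: "bool list \<Rightarrow> bool list \<Rightarrow> complex" where "s u v = (-1) ^ bdot u v" for u v
  define T where "T a' z w = cnj (c z) * c (bxor z a') * c w * cnj (c (bxor w a'))" for a' z w
  have L1: "complex_of_real (fourier n (char_dist n c) (a,b))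
     = (1/4^n) * (\<Sum>a'\<in>B. \<Sum>b'\<in>B. complex_of_real (char_dist n c (a',b')) * (s a a' * s b' b))"
    unfolding fourier_def sign2_def B_def s_def
    apply (simp add: sum.cartesian_product power_add bdot_comm[of b])
    apply (intro sum.cong refl)
    apply (auto split: prod.splits)
    done
  have L2: "complex_of_real (char_dist n c (a',b')) = (1/2^n) * (\<Sum>z\<in>B. \<Sum>w\<in>B. T a' z w * s b' z * s b' w)"
    if "a' \<in> B" "b' \<in> B" for a' b'
    using that Esq[of a' n b' c] unfolding char_dist_E B_def T_def s_def by simp
  have L3: "(\<Sum>b'\<in>B. s b' z * s b' w * s b' b) = (if w = bxor z b then 2^n else 0)"
    if "z \<in> B" "w \<in> B" for z w
  proof -
    have "(\<Sum>b'\<in>B. s b' z * s b' w * s b' b) = (\<Sum>b'\<in>B. s b' (bxor (bxor z w) b))"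
      using that b unfolding B_def s_def by (intro sum.cong refl) (simp add: sign_bxor)
    also have "\<dots> = (if w = bxor z b then 2^n else 0)"
      using that b unfolding B_def s_def by (subst char_sum) (simp_all add: delta_cond)
    finally show ?thesis .
  qed
  have L4: "(\<Sum>b'\<in>B. (\<Sum>z\<in>B. \<Sum>w\<in>B. T a' z w * s b' z * s b' w) * s b' b)
      = 2^n * (\<Sum>z\<in>B. T a' z (bxor z b))" for a'
  proof -
    have "(\<Sum>b'\<in>B. (\<Sum>z\<in>B. \<Sum>w\<in>B. T a' z w * s b' z * s b' w) * s b' b)
       = (\<Sum>b'\<in>B. \<Sum>z\<in>B. \<Sum>w\<in>B. T a' z w * (s b' z * s b' w * s b' b))"
      by (simp add: sum_distrib_right sum_distrib_left mult_ac)
    also have "\<dots> = (\<Sum>z\<in>B. \<Sum>w\<in>B. \<Sum>b'\<in>B. T a' z w * (s b' z * s b' w * s b' b))"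
      by (rule swap3)
    also have "\<dots> = (\<Sum>z\<in>B. \<Sum>w\<in>B. T a' z w * (if w = bxor z b then 2^n else 0))"
      by (simp add: sum_distrib_left[symmetric] L3)
    also have "\<dots> = (\<Sum>z\<in>B. T a' z (bxor z b) * 2^n)"
      using b by (intro sum.cong refl) (simp add: if_distrib[of "\<lambda>t. T a' _ _ * t"] sum.delta' B_def cong: if_cong)
    finally show ?thesis by (simp add: sum_distrib_left mult_ac)
  qed
  have "complex_of_real (fourier n (char_dist n c) (a,b))
     = (1/4^n) * (\<Sum>a'\<in>B. s a a' * (1/2^n) * (\<Sum>b'\<in>B. (\<Sum>z\<in>B. \<Sum>w\<in>B. T a' z w * s b' z * s b' w) * s b' b))"
    unfolding L1 by (simp add: L2 sum_distrib_left sum_distrib_right mult_ac)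
  also have "\<dots> = (1/4^n) * (\<Sum>a'\<in>B. \<Sum>z\<in>B. s a a' * T a' z (bxor z b))"
    by (simp only: L4) (simp add: sum_distrib_left)
  finally have LHS: "complex_of_real (fourier n (char_dist n c) (a,b))
     = (1/4^n) * (\<Sum>a'\<in>B. \<Sum>z\<in>B. s a a' * T a' z (bxor z b))" .
  have "complex_of_real ((1/2^n) * char_dist n c (b,a))
     = (1/4^n) * (\<Sum>y\<in>B. \<Sum>w\<in>B. cnj (c y) * c (bxor y b) * c w * cnj (c (bxor w b)) * s a y * s a w)"
    using Esq[of b n a c] a b unfolding char_dist_E B_def s_def
    by (simp add: power_mult_distrib[symmetric])
  also have "\<dots> = (1/4^n) * (\<Sum>y\<in>B. \<Sum>a'\<in>B. s a a' * T a' y (bxor y b))"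
  proof -
    have "(\<Sum>w\<in>B. cnj (c y) * c (bxor y b) * c w * cnj (c (bxor w b)) * s a y * s a w)
        = (\<Sum>a'\<in>B. s a a' * T a' y (bxor y b))" if y: "y \<in> B" for y
    proof (rule sym, rule sum.reindex_bij_witness[of _ "\<lambda>a'. bxor y a'" "\<lambda>w. bxor y w"])
      fix a' assume "a' \<in> B"
      then have len: "length a' = n" "length y = n" using y by (auto simp: B_def)
      show "bxor y (bxor y a') = a'" using len by simp
      show "bxor y a' \<in> B" using len by (simp add: B_def)
      have e1: "bxor (bxor y a') b = bxor (bxor y b) a'"
        by (metis bxor_assoc bxor_comm)
      have e2: "s a y * s a (bxor y a') = s a a'"
        using len a unfolding s_def by (simp add: sign_bxor mult.assoc[symmetric] neg1_sq)
      show "cnj (c y) * c (bxor y b) * c (bxor y a') * cnj (c (bxor (bxor y a') b)) * s a y * s a (bxor y a')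
         = s a a' * T a' y (bxor y b)"
        unfolding T_def e1 e2[symmetric] by (simp add: mult_ac)
    next
      fix w assume "w \<in> B"
      then have len: "length w = n" "length y = n" using y by (auto simp: B_def)
      show "bxor y (bxor y w) = w" using len by simp
      show "bxor y w \<in> B" using len by (simp add: B_def)
    qed
    then show ?thesis by simp
  qed
  also have "\<dots> = complex_of_real (fourier n (char_dist n c) (a,b))"
    unfolding LHS by (subst sum.swap) simp
  finally show ?thesis by (metis of_real_eq_iff)
qed


lemma holder3:
  fixes f :: "'a \<Rightarrow> real"
  shows "(\<Sum>i\<in>I. (f i)^2)^3 \<le> (real (card I))^2 * (\<Sum>i\<in>I. (f i)^6)"
proof -
  define S2 where "S2 = (\<Sum>i\<in>I. (f i)^2)"
  define S4 where "S4 = (\<Sum>i\<in>I. (f i)^4)"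
  define S6 where "S6 = (\<Sum>i\<in>I. (f i)^6)"
  define N where "N = real (card I)"
  have S2: "S2 \<ge> 0" unfolding S2_def by (simp add: sum_nonneg)
  have S6: "S6 \<ge> 0" unfolding S6_def by (simp add: sum_nonneg zero_le_even_power)
  have N: "N \<ge> 0" unfolding N_def by simp
  have c1: "S2^2 \<le> N * S4"
    using Cauchy_Schwarz_ineq_sum[of "\<lambda>i. (f i)^2" "\<lambda>_. 1" I]
    unfolding S2_def S4_def N_def by (simp add: power_mult[symmetric] mult.commute)
  have c2: "S4^2 \<le> S2 * S6"
    using Cauchy_Schwarz_ineq_sum[of f "\<lambda>i. (f i)^3" I]
    unfolding S2_def S4_def S6_def
    by (simp add: power_mult[symmetric] power_add[symmetric] flip: power_Suc)
  have "S2^4 = (S2^2)^2" by simp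
  also have "\<dots> \<le> (N * S4)^2"
    using c1 S2 by (intro power_mono) auto
  also have "\<dots> = N^2 * S4^2" by (simp add: power_mult_distrib)
  also have "\<dots> \<le> N^2 * (S2 * S6)" using c2 by (intro mult_left_mono) auto
  finally have *: "S2 * S2^3 \<le> S2 * (N^2 * S6)" by (simp add: mult_ac power_Suc[symmetric])
  show ?thesis
  proof (cases "S2 = 0")
    case True then show ?thesis using S6 unfolding S2_def[symmetric] S6_def[symmetric] N_def[symmetric] by simp
  next
    case False
    then have "S2 > 0" using S2 by simp
    with * have "S2^3 \<le> N^2 * S6" by simp
    then show ?thesis unfolding S2_def S6_def N_def .
  qed
qed

lemma card_bitstrings: "card (bitstrings n) = 2^n"
  unfolding bitstrings_def using card_lists_length_eq[of "UNIV::bool set" n] by simp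

lemma p_zero:
  assumes "length b = n"
  shows "char_dist n c (replicate n False, b)
    = (1/2^n) * (\<Sum>z\<in>bitstrings n. (cmod (c z))^2 * (-1) ^ bdot b z)^2"
proof -
  have E: "braket n c (XZ_apply (replicate n False) b c)
     = complex_of_real (\<Sum>z\<in>bitstrings n. (cmod (c z))^2 * (-1) ^ bdot b z)"
    unfolding braket_def XZ_apply_def of_real_sum
  proof (intro sum.cong refl)
    fix z assume "z \<in> bitstrings n"
    then have "bxor z (replicate n False) = z" using bxor_zero[of z] by simp
    then show "cnj (c z) * ((-1) ^ bdot b (bxor z (replicate n False)) * c (bxor z (replicate n False)))
       = complex_of_real ((cmod (c z))^2 * (-1) ^ bdot b z)"
      using complex_norm_square[of "c z"] by (simp add: mult_ac)
  qed
  show ?thesis unfolding char_dist_E E norm_of_real power2_abs ..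
qed

lemma parseval:
  fixes q :: "bool list \<Rightarrow> real"
  shows "(\<Sum>b\<in>bitstrings n. (\<Sum>z\<in>bitstrings n. q z * (-1) ^ bdot b z)^2)
     = 2^n * (\<Sum>z\<in>bitstrings n. (q z)^2)"
proof -
  define B where "B = bitstrings n"
  have "(\<Sum>b\<in>B. (\<Sum>z\<in>B. q z * (-1) ^ bdot b z)^2)
      = (\<Sum>b\<in>B. \<Sum>z\<in>B. \<Sum>w\<in>B. q z * q w * ((-1) ^ bdot b z * (-1) ^ bdot b w))"
    by (simp add: power2_eq_square sum_product mult_ac)
  also have "\<dots> = (\<Sum>z\<in>B. \<Sum>w\<in>B. \<Sum>b\<in>B. q z * q w * ((-1) ^ bdot b z * (-1) ^ bdot b w))"
    by (rule swap3)
  also have "\<dots> = (\<Sum>z\<in>B. \<Sum>w\<in>B. q z * q w * (if w = z then 2^n else 0))"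
  proof (intro sum.cong refl)
    fix z w assume zw: "z \<in> B" "w \<in> B"
    have "(\<Sum>b\<in>B. q z * q w * ((-1::real) ^ bdot b z * (-1) ^ bdot b w))
      = q z * q w * (\<Sum>b\<in>B. (-1) ^ bdot b (bxor z w))"
      using zw unfolding B_def by (simp add: sum_distrib_left sign_bxor)
    also have "\<dots> = q z * q w * (if w = z then 2^n else 0)"
      using zw bxor_eq_zero_iff[of z w] unfolding B_def by (subst char_sum) auto
    finally show "(\<Sum>b\<in>B. q z * q w * ((-1::real) ^ bdot b z * (-1) ^ bdot b w))
      = q z * q w * (if w = z then 2^n else 0)" .
  qed
  also have "\<dots> = (\<Sum>z\<in>B. q z * q z * 2^n)"
    by (intro sum.cong refl) (simp add: if_distrib[of "\<lambda>t. _ * t"] sum.delta B_def cong: if_cong)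
  also have "\<dots> = 2^n * (\<Sum>z\<in>B. (q z)^2)"
    by (simp add: sum_distrib_left power2_eq_square mult_ac)
  finally show ?thesis unfolding B_def .
qed


lemma pow23: "((2::real)^n)^3 = 8^n"
proof -
  have "((2::real)^n)^3 = (2^3)^n" by (metis power_mult mult.commute)
  then show ?thesis by simp
qed

theorem claim3p4:
  fixes n :: nat and c :: "bool list \<Rightarrow> complex"
  assumes "(\<Sum>x\<in>bitstrings n. (cmod (c x))\<^sup>2) = 1"
  shows "32 ^ n * (\<Sum>x\<in>bitstrings n \<times> bitstrings n. (fourier n (char_dist n c) x) ^ 3)
           \<ge> cmod (c (replicate n False)) ^ 12"
proof -
  define B where "B = bitstrings n"
  define p where "p = char_dist n c"
  define z0 where "z0 = replicate n False"
  define f where "f b = (\<Sum>z\<in>B. (cmod (c z))^2 * (-1) ^ bdot b z)" for b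
  have z0B: "z0 \<in> B" unfolding z0_def B_def by simp
  have pnn: "p x \<ge> 0" for x unfolding p_def char_dist_def by (simp split: prod.splits)
  have F: "(\<Sum>x\<in>B \<times> B. (fourier n p x)^3) = (1/8^n) * (\<Sum>(a,b)\<in>B \<times> B. (p (b,a))^3)"
    unfolding sum_distrib_left
  proof (intro sum.cong refl)
    fix x assume "x \<in> B \<times> B"
    then obtain a b where x: "x = (a,b)" "length a = n" "length b = n" by (auto simp: B_def)
    show "(fourier n p x)^3 = (1/8^n) * (case x of (a,b) \<Rightarrow> (p (b,a))^3)"
      using fourier_swap[OF x(2,3), of c] unfolding x p_def
      by (simp add: power_divide pow23)
  qed
  have G: "(\<Sum>(a,b)\<in>B \<times> B. (p (b,a))^3) \<ge> (\<Sum>a\<in>B. (p (z0,a))^3)"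
  proof -
    have "(\<Sum>a\<in>B. (p (z0,a))^3) = (\<Sum>(a,b)\<in>B \<times> {z0}. (p (b,a))^3)"
      by (simp add: sum.cartesian_product[symmetric])
    also have "\<dots> \<le> (\<Sum>(a,b)\<in>B \<times> B. (p (b,a))^3)"
      using z0B pnn by (intro sum_mono2) (auto simp: B_def)
    finally show ?thesis .
  qed
  have H: "(\<Sum>a\<in>B. (p (z0,a))^3) = (1/8^n) * (\<Sum>a\<in>B. (f a)^6)"
    unfolding sum_distrib_left
  proof (intro sum.cong refl)
    fix a assume "a \<in> B"
    then show "(p (z0,a))^3 = (1/8^n) * (f a)^6"
      using p_zero[of a n c] unfolding p_def z0_def f_def B_def
      by (simp add: power_divide pow23[unfolded power_mult[symmetric]] flip: power_mult)
  qed
  have P: "(\<Sum>a\<in>B. (f a)^2) \<ge> 2^n * (cmod (c z0))^4"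
  proof -
    have "(\<Sum>a\<in>B. (f a)^2) = 2^n * (\<Sum>z\<in>B. ((cmod (c z))^2)^2)"
      unfolding f_def B_def by (rule parseval)
    moreover have "(\<Sum>z\<in>B. ((cmod (c z))^2)^2) \<ge> ((cmod (c z0))^2)^2"
      using z0B by (intro member_le_sum) (auto simp: B_def)
    ultimately show ?thesis by (simp flip: power_mult)
  qed
  have Hd: "(\<Sum>a\<in>B. (f a)^2)^3 \<le> (2^n)^2 * (\<Sum>a\<in>B. (f a)^6)"
    using holder3[of f B] unfolding B_def card_bitstrings by simp
  have "(2^n * (cmod (c z0))^4)^3 \<le> (\<Sum>a\<in>B. (f a)^2)^3"
    using P by (intro power_mono) auto
  also note Hd
  finally have S6: "(2^n * (cmod (c z0))^4)^3 \<le> (2^n)^2 * (\<Sum>a\<in>B. (f a)^6)" .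
  have e1: "((cmod (c z0))^4)^3 = (cmod (c z0))^12" by (simp flip: power_mult)
  have e2: "((2::real)^n * y)^3 = (2^n)^2 * (2^n * y^3)" for y
    by (simp add: power3_eq_cube power2_eq_square mult_ac)
  have S6': "2^n * (cmod (c z0))^12 \<le> (\<Sum>a\<in>B. (f a)^6)"
    using S6 unfolding e2 e1 by (simp add: mult_le_cancel_left_pos)
  have k: "(32::real)^n = 8^n * 8^n / 2^n"
    by (simp add: power_mult_distrib[symmetric] field_simps)
  have "32^n * (\<Sum>x\<in>B \<times> B. (fourier n p x)^3) \<ge> 32^n * ((1/8^n) * ((1/8^n) * (\<Sum>a\<in>B. (f a)^6)))"
    unfolding F H[symmetric] using G by (intro mult_left_mono) auto
  moreover have "32^n * ((1/8^n) * ((1/8^n) * (\<Sum>a\<in>B. (f a)^6))) = (\<Sum>a\<in>B. (f a)^6) / 2^n"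
    unfolding k by (simp add: field_simps)
  moreover have "(\<Sum>a\<in>B. (f a)^6) / 2^n \<ge> (cmod (c z0))^12"
    using S6' by (simp add: field_simps)
  ultimately show ?thesis unfolding B_def p_def z0_def by linarith
qed

end
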